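(* Let $p>1$, $q>0$, let $F$ be the CDF of the log-logistic distribution $GBP(1,1,p,q)$, and let $y>0$. Then $$\mathrm{CRPS}(F\mid y) = \frac{p-1}{p^2}\cdot\frac{q\pi}{\sin(\pi/p)} + y\left(1-\frac{2q^p}{q^p+y^p}\;{}_2F_1\!\left(1,1;1+\tfrac1p;\frac{y^p}{q^p+y^p}\right)\right).$$
   Context: The generalized Beta-prime distribution $GBP(\alpha,\beta,p,q)$ with parameters $\alpha,\beta,p,q>0$ is the distribution on $(0,\infty)$ with density $p_Z(z)=\frac{p}{qB(\alpha,\beta)}\frac{(z/q)^{\alpha p-1}}{(1+(z/q)^p)^{\alpha+\beta}}$ for $z>0$; the log-logistic distribution is the case $\alpha=\beta=1$. For a CDF $F$ and observation $y\in\mathbb R$, $\mathrm{CRPS}(F\mid y)=\int_{\mathbb R}(F(x)-H(x-y))^2\,dx$ with $H$ the Heaviside step function. ${}_2F_1$ is the Gauss hypergeometric function. *)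

theory Defs
  imports "HOL-Analysis.Analysis"
begin

definition gbp_density :: "real \<Rightarrow> real \<Rightarrow> real \<Rightarrow> real \<Rightarrow> real \<Rightarrow> real" where
  "gbp_density \<alpha> \<beta> p q z =
     (if z > 0 then p / (q * Beta \<alpha> \<beta>) * (z / q) powr (\<alpha> * p - 1)
                    / (1 + (z / q) powr p) powr (\<alpha> + \<beta>)
      else 0)"

definition gbp_cdf :: "real \<Rightarrow> real \<Rightarrow> real \<Rightarrow> real \<Rightarrow> real \<Rightarrow> real" where
  "gbp_cdf \<alpha> \<beta> p q x = integral {..x} (gbp_density \<alpha> \<beta> p q)"

text \<open>Heaviside step function (value at 0 is irrelevant for the integral).\<close>
definition heaviside :: "real \<Rightarrow> real" where
  "heaviside x = (if x \<ge> 0 then 1 else 0)"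

definition hyp2F1 :: "real \<Rightarrow> real \<Rightarrow> real \<Rightarrow> real \<Rightarrow> real" where
  "hyp2F1 a b c z =
     (\<Sum>n. pochhammer a n * pochhammer b n / (pochhammer c n * fact n) * z ^ n)"

end

theory Submission
  imports Defs
begin
definition cc :: "real \<Rightarrow> nat \<Rightarrow> real" where
  "cc s n = fact n / pochhammer (1 + s) n"

definition SS :: "real \<Rightarrow> real \<Rightarrow> real" where
  "SS s z = (\<Sum>n. cc s n * z ^ n)"

definition SS' :: "real \<Rightarrow> real \<Rightarrow> real" where
  "SS' s z = (\<Sum>n. diffs (cc s) n * z ^ n)"

lemma hyp_SS: "hyp2F1 1 1 (1 + s) z = SS s z"
  unfolding hyp2F1_def SS_def cc_def
  by (simp add: pochhammer_fact[symmetric])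

lemma cc_pos: "s > 0 \<Longrightarrow> cc s n > 0"
  unfolding cc_def by (intro divide_pos_pos pochhammer_pos) auto

lemma fact_le_poch: "(s::real) \<ge> 0 \<Longrightarrow> fact n \<le> pochhammer (1 + s) n"
proof (induction n)
  case 0 then show ?case by simp
next
  case (Suc n)
  have "fact (Suc n) = fact n * (1 + real n)" by (simp add: algebra_simps)
  also have "\<dots> \<le> pochhammer (1 + s) n * (1 + s + real n)"
    using Suc pochhammer_pos[of "1+s" n] by (intro mult_mono) auto
  finally show ?case by (simp add: pochhammer_Suc)
qed

lemma cc_le1: "s > 0 \<Longrightarrow> cc s n \<le> 1"
  unfolding cc_def using fact_le_poch[of s n] pochhammer_pos[of "1+s" n]
  by (simp add: divide_le_eq)

lemma cc_rec: "s > 0 \<Longrightarrow> (s + real n + 1) * cc s (Suc n) = (real n + 1) * cc s n"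
proof -
  assume s: "s > 0"
  have p: "pochhammer (1 + s) n > 0" using pochhammer_pos[of "1+s" n] s by simp
  have "cc s (Suc n) = fact n * (real n + 1) / (pochhammer (1 + s) n * (s + real n + 1))"
    unfolding cc_def by (simp add: pochhammer_Suc algebra_simps)
  also have "(s + real n + 1) * \<dots> = (real n + 1) * cc s n"
  proof -
    have nz: "s + real n + 1 \<noteq> 0" using s by linarith
    have "(s + real n + 1) * (fact n * (real n + 1) / (pochhammer (1 + s) n * (s + real n + 1)))
       = (fact n * (real n + 1)) / pochhammer (1 + s) n"
      using nz by (metis mult.commute nonzero_mult_div_cancel_left times_divide_eq_right divide_divide_eq_left)
    thus ?thesis unfolding cc_def by simp
  qed
  finally show ?thesis by simp
qed

lemma summable_cc: assumes "s > 0" "norm z < 1" shows "summable (\<lambda>n. cc s n * z ^ n)"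
proof (rule summable_comparison_test'[where g="\<lambda>n. norm z ^ n"])
  show "summable (\<lambda>n. norm z ^ n)" using assms by (simp add: summable_geometric)
  fix n show "norm (cc s n * z ^ n) \<le> norm z ^ n"
    using cc_pos[OF assms(1), of n] cc_le1[OF assms(1), of n]
    by (simp add: abs_mult power_abs mult_left_le_one_le)
qed

lemma SS_deriv: assumes "s > 0" "\<bar>z\<bar> < 1"
  shows "(SS s has_real_derivative SS' s z) (at z)"
  unfolding SS_def[abs_def] SS'_def
  by (rule termdiffs_strong'[where K=1]) (use assms summable_cc in auto)

lemma summable_SS': assumes "s > 0" "\<bar>z\<bar> < 1"
  shows "summable (\<lambda>n. diffs (cc s) n * z ^ n)"
  by (rule termdiff_converges[where K=1]) (use assms summable_cc in auto)

lemma SS_ode: assumes s: "s > 0" and z: "\<bar>z\<bar> < 1"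
  shows "(s - z) * SS s z + z * (1 - z) * SS' s z = s"
proof -
  define S where "S = SS s z"
  define W where "W = z * SS' s z"
  have S: "(\<lambda>n. cc s n * z ^ n) sums S"
    unfolding S_def SS_def using summable_cc[of s z] assms by (simp add: summable_sums)
  have "(\<lambda>n. diffs (cc s) n * z ^ n) sums SS' s z"
    unfolding SS'_def using summable_SS'[OF assms] by (simp add: summable_sums)
  hence "(\<lambda>n. z * (diffs (cc s) n * z ^ n)) sums W"
    unfolding W_def by (rule sums_mult)
  hence "(\<lambda>n. real (Suc n) * cc s (Suc n) * z ^ (Suc n)) sums W"
    by (simp add: diffs_def algebra_simps)
  hence W: "(\<lambda>n. real n * cc s n * z ^ n) sums W"
    using sums_Suc_iff[where f="\<lambda>n. real n * cc s n * z ^ n"] by simp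
  have T: "(\<lambda>n. (s + real n) * cc s n * z ^ n) sums (s * S + W)"
    using sums_add[OF sums_mult[OF S, of s] W] by (simp add: algebra_simps)
  have "(\<lambda>n. (1 + real n) * cc s n * z ^ n) sums (S + W)"
    using sums_add[OF S W] by (simp add: algebra_simps)
  hence "(\<lambda>n. z * ((1 + real n) * cc s n * z ^ n)) sums (z * (S + W))"
    by (rule sums_mult)
  hence "(\<lambda>n. (s + real (Suc n)) * cc s (Suc n) * z ^ (Suc n)) sums (z * (S + W))"
  proof (rule sums_cong[THEN iffD1, rotated])
    fix n
    show "z * ((1 + real n) * cc s n * z ^ n) = (s + real (Suc n)) * cc s (Suc n) * z ^ Suc n"
      using cc_rec[OF s, of n] by (simp add: algebra_simps)
  qed
  hence "(\<lambda>n. (s + real n) * cc s n * z ^ n) sums (z * (S + W) + s * cc s 0)"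
    by (subst (asm) sums_Suc_iff) simp
  hence "s * S + W = z * (S + W) + s"
    using sums_unique2[OF T] by (simp add: cc_def)
  thus ?thesis unfolding S_def W_def by (simp add: algebra_simps)
qed

lemma abel_ratio:
  fixes c d :: "nat \<Rightarrow> real" and D :: "real \<Rightarrow> real" and L :: real
  assumes d_pos: "\<And>n. d n > 0"
    and ratio: "(\<lambda>n. c n / d n) \<longlonglongrightarrow> L"
    and sumc: "\<And>z. 0 \<le> z \<Longrightarrow> z < 1 \<Longrightarrow> summable (\<lambda>n. c n * z ^ n)"
    and sumd: "\<And>z. 0 \<le> z \<Longrightarrow> z < 1 \<Longrightarrow> (\<lambda>n. d n * z ^ n) sums D z"
    and Dinf: "filterlim D at_top (at_left 1)"
  shows "((\<lambda>z. (\<Sum>n. c n * z ^ n) / D z) \<longlongrightarrow> L) (at_left 1)"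
proof (rule tendstoI)
  fix e :: real assume e: "e > 0"
  have "eventually (\<lambda>n. dist (c n / d n) L < e / 2) sequentially"
    using ratio e by (intro tendstoD) auto
  then obtain N where N: "\<And>n. n \<ge> N \<Longrightarrow> \<bar>c n / d n - L\<bar> < e / 2"
    by (auto simp: eventually_sequentially dist_real_def)
  define B where "B = (\<Sum>n<N. \<bar>c n - L * d n\<bar>)"
  have B0: "B \<ge> 0" unfolding B_def by (intro sum_nonneg) auto
  have ev1: "eventually (\<lambda>z. z \<in> {0<..<1}) (at_left (1::real))"
    by (rule eventually_at_left_real) simp
  have ev2: "eventually (\<lambda>z. D z > 2 * B / e + 1) (at_left (1::real))"
    using Dinf by (simp add: filterlim_at_top_dense)
  show "eventually (\<lambda>z. dist ((\<Sum>n. c n * z ^ n) / D z) L < e) (at_left 1)"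
    using ev1 ev2
  proof eventually_elim
    case (elim z)
    hence z: "0 < z" "z < 1" and Dz: "D z > 2 * B / e + 1" by auto
    have "2 * B / e \<ge> 0" using B0 e by simp
    hence Dpos: "D z > 0" using Dz by linarith
    have "2 * B / e < D z" using Dz by linarith
    hence B2: "2 * B < D z * e" using pos_divide_less_eq[OF e] by simp
    define C where "C = (\<Sum>n. c n * z ^ n)"
    have Cs: "(\<lambda>n. c n * z ^ n) sums C" unfolding C_def using sumc[of z] z by (simp add: summable_sums)
    have Ds: "(\<lambda>n. d n * z ^ n) sums D z" using sumd[of z] z by simp
    have Es: "(\<lambda>n. (c n - L * d n) * z ^ n) sums (C - L * D z)"
      using sums_diff[OF Cs sums_mult[OF Ds, of L]] by (simp add: algebra_simps)
    define g where "g n = (if n \<in> {..<N} then \<bar>c n - L * d n\<bar> else 0)" for n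
    have gs: "g sums B" unfolding g_def B_def by (rule sums_If_finite_set) simp
    have Rs: "(\<lambda>n. g n + e / 2 * (d n * z ^ n)) sums (B + e / 2 * D z)"
      by (intro sums_add gs sums_mult Ds)
    have bound: "\<bar>(c n - L * d n) * z ^ n\<bar> \<le> g n + e / 2 * (d n * z ^ n)" for n
    proof (cases "n < N")
      case True
      have "\<bar>(c n - L * d n) * z ^ n\<bar> = \<bar>c n - L * d n\<bar> * z ^ n" using z by (simp add: abs_mult)
      also have "\<dots> \<le> \<bar>c n - L * d n\<bar> * 1"
        using z by (intro mult_left_mono power_le_one) auto
      also have "0 \<le> e / 2 * (d n * z ^ n)" using e z d_pos[of n] by simp
      ultimately show ?thesis using True unfolding g_def by simp
    next
      case False
      hence a: "\<bar>c n / d n - L\<bar> < e / 2" using N by simp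
      have b: "c n / d n - L = (c n - L * d n) / d n"
        using d_pos[of n] by (simp add: field_simps)
      have c: "\<bar>(c n - L * d n) / d n\<bar> = \<bar>c n - L * d n\<bar> / d n"
        using d_pos[of n] by (simp add: abs_divide)
      have "\<bar>c n - L * d n\<bar> / d n < e / 2" using a unfolding b c .
      hence "\<bar>c n - L * d n\<bar> < e / 2 * d n" using d_pos[of n] by (simp add: pos_divide_less_eq)
      hence "\<bar>c n - L * d n\<bar> * z ^ n \<le> e / 2 * d n * z ^ n"
        using z by (intro mult_right_mono) auto
      thus ?thesis using False z unfolding g_def by (simp add: abs_mult)
    qed
    have summ: "summable (\<lambda>n. \<bar>(c n - L * d n) * z ^ n\<bar>)"
      by (rule summable_comparison_test'[OF sums_summable[OF Rs], of 0]) (use bound in auto)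
    have "\<bar>C - L * D z\<bar> \<le> (\<Sum>n. \<bar>(c n - L * d n) * z ^ n\<bar>)"
      using summable_rabs[OF summ] sums_unique[OF Es] by simp
    also have "\<dots> \<le> (\<Sum>n. g n + e / 2 * (d n * z ^ n))"
      by (intro suminf_le bound summ sums_summable[OF Rs])
    also have "\<dots> = B + e / 2 * D z" using Rs by (simp add: sums_iff)
    finally have le: "\<bar>C - L * D z\<bar> \<le> B + e / 2 * D z" .
    have "\<bar>C / D z - L\<bar> = \<bar>C - L * D z\<bar> / D z" using Dpos
      by (simp add: diff_divide_distrib abs_div_pos)
    also have "\<dots> \<le> (B + e / 2 * D z) / D z" using le Dpos by (intro divide_right_mono) auto
    also have "\<dots> = B / D z + e / 2" using Dpos by (simp add: add_divide_distrib)
    also have "B / D z < e / 2"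
    proof -
      have "B < e / 2 * D z" using B2 by (simp add: algebra_simps)
      thus ?thesis using Dpos by (simp add: pos_divide_less_eq)
    qed
    finally show ?case unfolding C_def dist_real_def by simp
  qed
qed

lemma Gamma_reflection_real:
  fixes s :: real assumes "0 < s" "s < 1"
  shows "Gamma s * Gamma (1 - s) = pi / sin (pi * s)"
proof -
  have "complex_of_real (Gamma s * Gamma (1 - s)) = Gamma (complex_of_real s) * Gamma (1 - complex_of_real s)"
    by (simp add: Gamma_complex_of_real[symmetric])
  also have "\<dots> = of_real pi / sin (of_real pi * of_real s)" by (rule Gamma_reflection_complex)
  also have "\<dots> = complex_of_real (pi / sin (pi * s))"
    by (simp add: sin_of_real[symmetric])
  finally show ?thesis by (simp only: of_real_eq_iff)
qed

definition dd :: "real \<Rightarrow> nat \<Rightarrow> real" where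
  "dd s n = pochhammer (1 - s) n / fact n"

lemma dd_pos: "s < 1 \<Longrightarrow> dd s n > 0"
  unfolding dd_def by (intro divide_pos_pos pochhammer_pos) auto

lemma dd_sums: assumes "s < 1" "0 \<le> z" "z < 1"
  shows "(\<lambda>n. dd s n * z ^ n) sums (1 - z) powr (s - 1)"
proof -
  have "\<bar>-z\<bar> < 1" using assms by simp
  from gen_binomial_real[OF this, of "s - 1"]
  have "(\<lambda>n. ((s - 1) gchoose n) * (- z) ^ n) sums (1 + - z) powr (s - 1)" .
  moreover have "((s - 1) gchoose n) * (- z) ^ n = dd s n * z ^ n" for n
  proof -
    have "((s - 1) gchoose n) * (- z) ^ n = ((-1) ^ n * (-1) ^ n) * (pochhammer (1 - s) n / fact n) * z ^ n"
      by (simp add: gbinomial_pochhammer power_minus[of z] algebra_simps)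
    also have "(-1::real) ^ n * (-1) ^ n = 1" by (simp add: power_mult_distrib[symmetric])
    finally show ?thesis by (simp add: dd_def)
  qed
  ultimately show ?thesis by simp
qed

lemma frac_cancel_aux:
  fixes a s n P Q r :: real
  assumes "s \<noteq> 0" "n \<noteq> 0" "P \<noteq> 0" "Q \<noteq> 0" "r \<noteq> 0"
  shows "(a * n / (s * P * (Q * r))) * (s * (r / n)) = a / (P * Q)"
  using assms by (simp add: field_simps)

lemma ratio_lim: assumes s: "0 < s" "s < 1"
  shows "(\<lambda>n. cc s n / dd s n) \<longlonglongrightarrow> s * pi / sin (pi * s)"
proof -
  have lim: "(\<lambda>n. Gamma_series s n * Gamma_series (1 - s) n * (s * (1 + (1 - s) / real n)))
      \<longlonglongrightarrow> Gamma s * Gamma (1 - s) * (s * (1 + 0))"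
    by (intro tendsto_intros)
  have eq: "eventually (\<lambda>n. Gamma_series s n * Gamma_series (1 - s) n * (s * (1 + (1 - s) / real n))
      = cc s n / dd s n) sequentially"
    using eventually_gt_at_top[of "0::nat"]
  proof eventually_elim
    case (elim n)
    hence n: "real n > 0" by simp
    have e: "exp (s * ln (real n)) * exp ((1 - s) * ln (real n)) = real n"
      using n by (simp add: exp_add[symmetric] algebra_simps)
    have P1: "pochhammer s (n + 1) = s * pochhammer (1 + s) n"
      by (simp add: pochhammer_rec add.commute)
    have P2: "pochhammer (1 - s) (n + 1) = pochhammer (1 - s) n * (1 - s + real n)"
      by (simp add: pochhammer_Suc)
    have p1: "pochhammer (1 + s) n > 0" using s by (intro pochhammer_pos) auto
    have p2: "pochhammer (1 - s) n > 0" using s by (intro pochhammer_pos) auto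
    have nz: "1 - s + real n > 0" using s by simp
    have "Gamma_series s n * Gamma_series (1 - s) n
        = fact n * fact n * (exp (s * ln (real n)) * exp ((1 - s) * ln (real n)))
          / (pochhammer s (n + 1) * pochhammer (1 - s) (n + 1))"
      unfolding Gamma_series_def by (simp add: field_simps)
    also have "\<dots> = fact n * fact n * real n / (s * pochhammer (1 + s) n * (pochhammer (1 - s) n * (1 - s + real n)))"
      by (simp only: e P1 P2 mult.assoc)
    finally have G: "Gamma_series s n * Gamma_series (1 - s) n = \<dots>" .
    have r: "1 + (1 - s) / real n = (1 - s + real n) / real n" using n by (simp add: field_simps)
    have "fact n * fact n * real n / (s * pochhammer (1 + s) n * (pochhammer (1 - s) n * (1 - s + real n)))
          * (s * ((1 - s + real n) / real n)) = fact n * fact n / (pochhammer (1 + s) n * pochhammer (1 - s) n)"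
      by (rule frac_cancel_aux) (use n p1 p2 nz s in auto)
    thus ?case unfolding G cc_def dd_def r by simp
  qed
  have "(\<lambda>n. cc s n / dd s n) \<longlonglongrightarrow> Gamma s * Gamma (1 - s) * (s * (1 + 0))"
    using Lim_transform_eventually[OF lim eq] .
  thus ?thesis using Gamma_reflection_real[OF s] by (simp add: field_simps)
qed

lemma SS_lim: assumes s: "0 < s" "s < 1"
  shows "((\<lambda>z. (1 - z) powr (1 - s) * SS s z) \<longlongrightarrow> s * pi / sin (pi * s)) (at_left 1)"
proof -
  have ev0: "eventually (\<lambda>z. z \<in> {0<..<1}) (at_left (1::real))"
    by (rule eventually_at_left_real) simp
  have Dinf: "filterlim (\<lambda>z. (1 - z) powr (s - 1)) at_top (at_left (1::real))"
  proof -
    have t: "((\<lambda>z. 1 - z) \<longlongrightarrow> (0::real)) (at_left 1)"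
      by (intro tendsto_eq_intros) auto
    have ev: "eventually (\<lambda>z. 0 < 1 - z) (at_left (1::real))"
      using ev0 by eventually_elim auto
    have "((\<lambda>z. (1 - z) powr (1 - s)) \<longlongrightarrow> 0) (at_left (1::real))"
      by (rule tendsto_zero_powrI[OF t tendsto_const]) (use ev s in \<open>auto elim: eventually_mono\<close>)
    moreover have "eventually (\<lambda>z. 0 < (1 - z) powr (1 - s)) (at_left (1::real))"
      using ev by eventually_elim simp
    ultimately have "filterlim (\<lambda>z. inverse ((1 - z) powr (1 - s))) at_top (at_left (1::real))"
      by (rule filterlim_inverse_at_top)
    moreover have "inverse ((1 - z) powr (1 - s)) = (1 - z) powr (s - 1)" for z :: real
      by (simp add: powr_minus[symmetric])
    ultimately show ?thesis by simp
  qed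
  have A: "((\<lambda>z. (\<Sum>n. cc s n * z ^ n) / (1 - z) powr (s - 1)) \<longlongrightarrow> s * pi / sin (pi * s)) (at_left 1)"
    by (rule abel_ratio[OF dd_pos ratio_lim[OF s] summable_cc dd_sums Dinf]) (use s in auto)
  have "eventually (\<lambda>z. (\<Sum>n. cc s n * z ^ n) / (1 - z) powr (s - 1) = (1 - z) powr (1 - s) * SS s z) (at_left (1::real))"
    using ev0
  proof eventually_elim
    case (elim z)
    have "(1 - z) powr (1 - s) = inverse ((1 - z) powr (s - 1))"
      by (simp add: powr_minus[symmetric])
    thus ?case unfolding SS_def by (simp add: divide_inverse mult.commute)
  qed
  thus ?thesis using Lim_transform_eventually[OF A] by simp
qed

definition FF :: "real \<Rightarrow> real \<Rightarrow> real \<Rightarrow> real" where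
  "FF p q x = x powr p / (q powr p + x powr p)"
definition gg :: "real \<Rightarrow> real \<Rightarrow> real \<Rightarrow> real" where
  "gg p q x = x * q powr p / (q powr p + x powr p)"
definition Psi :: "real \<Rightarrow> real \<Rightarrow> real \<Rightarrow> real" where
  "Psi p q x = gg p q x * SS (1 / p) (FF p q x)"
definition KK :: "real \<Rightarrow> real \<Rightarrow> real \<Rightarrow> real" where
  "KK p q x = (1 - 1 / p) * Psi p q x + (1 / p) * gg p q x"
definition M1 :: "real \<Rightarrow> real \<Rightarrow> real \<Rightarrow> real" where
  "M1 p q x = x - 2 * Psi p q x + KK p q x"

context
  fixes p q :: real
  assumes p: "p > 1" and q: "q > 0"
begin

lemma Qpos: "q powr p > 0" using q by simp

lemma den_pos: "x \<ge> 0 \<Longrightarrow> q powr p + x powr p > 0"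
  using Qpos powr_ge_zero[of x p] by linarith

lemma FF_bounds: "x \<ge> 0 \<Longrightarrow> 0 \<le> FF p q x \<and> FF p q x < 1"
  using Qpos den_pos[of x] unfolding FF_def by (auto simp: divide_less_eq)

lemma one_minus_FF: "x \<ge> 0 \<Longrightarrow> 1 - FF p q x = q powr p / (q powr p + x powr p)"
  using den_pos[of x] unfolding FF_def by (simp add: field_simps)

lemma zero_vals: "FF p q 0 = 0" "gg p q 0 = 0" "Psi p q 0 = 0" "KK p q 0 = 0" "M1 p q 0 = 0"
  using p unfolding FF_def gg_def Psi_def KK_def M1_def by auto

lemma x_powr_mult: "x > 0 \<Longrightarrow> x * x powr (p - 1) = x powr p"
  by (simp add: powr_mult_base)

lemma FF_deriv: assumes x: "x > 0"
  shows "(FF p q has_real_derivative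
     (p * x powr (p - 1) * q powr p / (q powr p + x powr p)^2)) (at x)"
proof -
  have dX: "((\<lambda>x. x powr p) has_real_derivative p * x powr (p - 1)) (at x)"
    by (rule has_real_derivative_powr[OF x])
  have dD: "((\<lambda>x. q powr p + x powr p) has_real_derivative p * x powr (p - 1)) (at x)"
    using DERIV_add[OF DERIV_const dX] by simp
  have "((\<lambda>x. x powr p / (q powr p + x powr p)) has_real_derivative
     (p * x powr (p - 1) * (q powr p + x powr p) - x powr p * (p * x powr (p - 1)))
       / ((q powr p + x powr p) * (q powr p + x powr p))) (at x)"
    by (rule DERIV_divide[OF dX dD]) (use den_pos[of x] x in auto)
  thus ?thesis unfolding FF_def[abs_def]
    by (rule DERIV_cong) (simp add: power2_eq_square algebra_simps)
qed

lemma gg_deriv: assumes x: "x > 0"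
  shows "(gg p q has_real_derivative
     (q powr p * (q powr p + x powr p) - x * q powr p * (p * x powr (p - 1)))
       / (q powr p + x powr p)^2) (at x)"
proof -
  have dX: "((\<lambda>x. x powr p) has_real_derivative p * x powr (p - 1)) (at x)"
    by (rule has_real_derivative_powr[OF x])
  have dD: "((\<lambda>x. q powr p + x powr p) has_real_derivative p * x powr (p - 1)) (at x)"
    using DERIV_add[OF DERIV_const dX] by simp
  have dN: "((\<lambda>x. x * q powr p) has_real_derivative q powr p) (at x)"
    using DERIV_cmult_right[OF DERIV_ident, of "q powr p"] by simp
  have "((\<lambda>x. x * q powr p / (q powr p + x powr p)) has_real_derivative
     (q powr p * (q powr p + x powr p) - x * q powr p * (p * x powr (p - 1)))
       / ((q powr p + x powr p) * (q powr p + x powr p))) (at x)"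
    by (rule DERIV_divide[OF dN dD]) (use den_pos[of x] x in auto)
  thus ?thesis unfolding gg_def[abs_def]
    by (rule DERIV_cong) (simp add: power2_eq_square)
qed

lemma gg'_eq: assumes x: "x > 0"
  shows "(q powr p * (q powr p + x powr p) - x * q powr p * (p * x powr (p - 1)))
       / (q powr p + x powr p)^2 = (1 - FF p q x) * (1 - p * FF p q x)"
proof -
  have e: "x * q powr p * (p * x powr (p - 1)) = p * q powr p * x powr p"
    using x_powr_mult[OF x] by (metis mult.assoc mult.commute)
  have d: "q powr p + x powr p > 0" using den_pos[of x] x by simp
  show ?thesis unfolding e one_minus_FF[OF less_imp_le[OF x]] unfolding FF_def
    using d by (simp add: field_simps power2_eq_square)
qed

lemma ggFF'_eq: assumes x: "x > 0"
  shows "gg p q x * (p * x powr (p - 1) * q powr p / (q powr p + x powr p)^2)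
     = p * FF p q x * (1 - FF p q x)^2"
proof -
  have e: "x * q powr p * (p * x powr (p - 1) * q powr p) = p * q powr p * q powr p * x powr p"
    using x_powr_mult[OF x] by (metis mult.assoc mult.commute)
  have d: "q powr p + x powr p > 0" using den_pos[of x] x by simp
  have "gg p q x * (p * x powr (p - 1) * q powr p / (q powr p + x powr p)^2)
     = (x * q powr p * (p * x powr (p - 1) * q powr p)) / (q powr p + x powr p)^3"
    unfolding gg_def using d by (simp add: field_simps power2_eq_square power3_eq_cube)
  also have "\<dots> = p * FF p q x * (1 - FF p q x)^2"
    unfolding e one_minus_FF[OF less_imp_le[OF x]] unfolding FF_def
    using d by (simp add: field_simps power2_eq_square power3_eq_cube)
  finally show ?thesis .
qed

lemma Psi_deriv: assumes x: "x > 0"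
  shows "(Psi p q has_real_derivative (1 - FF p q x)) (at x)"
proof -
  define z where "z = FF p q x"
  have z: "0 \<le> z" "z < 1" using FF_bounds[of x] x unfolding z_def by auto
  have s: "1 / p > 0" using p by simp
  have dS: "(SS (1/p) has_real_derivative SS' (1/p) z) (at z)"
    by (rule SS_deriv[OF s]) (use z in auto)
  have dSF: "((\<lambda>x. SS (1/p) (FF p q x)) has_real_derivative
      SS' (1/p) z * (p * x powr (p - 1) * q powr p / (q powr p + x powr p)^2)) (at x)"
    by (rule DERIV_chain2[OF dS[unfolded z_def] FF_deriv[OF x], folded z_def])
  have dP: "(Psi p q has_real_derivative
      ((q powr p * (q powr p + x powr p) - x * q powr p * (p * x powr (p - 1)))
       / (q powr p + x powr p)^2) * SS (1/p) z +
      gg p q x * (SS' (1/p) z * (p * x powr (p - 1) * q powr p / (q powr p + x powr p)^2))) (at x)"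
    unfolding Psi_def[abs_def] z_def using DERIV_mult[OF gg_deriv[OF x] dSF[unfolded z_def]] by (simp add: mult.commute)
  have ode: "(1 / p - z) * SS (1/p) z + z * (1 - z) * SS' (1/p) z = 1 / p"
    by (rule SS_ode[OF s]) (use z in auto)
  hence ode': "(1 - p * z) * SS (1/p) z + p * z * (1 - z) * SS' (1/p) z = 1"
    using p by (simp add: field_simps)
  have "((q powr p * (q powr p + x powr p) - x * q powr p * (p * x powr (p - 1)))
       / (q powr p + x powr p)^2) * SS (1/p) z +
      gg p q x * (SS' (1/p) z * (p * x powr (p - 1) * q powr p / (q powr p + x powr p)^2))
      = (1 - z) * (1 - p * z) * SS (1/p) z + SS' (1/p) z * (p * z * (1 - z)^2)" (is "?lhs = _")
    unfolding gg'_eq[OF x] ggFF'_eq[OF x, symmetric] z_def by (simp add: algebra_simps)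
  also have "\<dots> = (1 - z) * ((1 - p * z) * SS (1/p) z + p * z * (1 - z) * SS' (1/p) z)"
    by (simp add: algebra_simps power2_eq_square)
  also have "\<dots> = 1 - z" using ode' by simp
  finally have e: "?lhs = 1 - z" .
  show ?thesis using DERIV_cong[OF dP e] unfolding z_def .
qed

lemma KK_deriv: assumes x: "x > 0"
  shows "(KK p q has_real_derivative (1 - FF p q x)^2) (at x)"
proof -
  have d: "(KK p q has_real_derivative (1 - 1/p) * (1 - FF p q x) + 1/p * ((1 - FF p q x) * (1 - p * FF p q x))) (at x)"
    unfolding KK_def[abs_def]
    by (intro DERIV_add DERIV_cmult Psi_deriv[OF x] gg_deriv[OF x, unfolded gg'_eq[OF x]])
  show ?thesis using p by (intro DERIV_cong[OF d]) (simp add: field_simps power2_eq_square)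
qed

lemma M1_deriv: assumes x: "x > 0"
  shows "(M1 p q has_real_derivative (FF p q x)^2) (at x)"
proof -
  have d: "(M1 p q has_real_derivative 1 - 2 * (1 - FF p q x) + (1 - FF p q x)^2) (at x)"
    unfolding M1_def[abs_def]
    by (intro DERIV_add DERIV_diff DERIV_cmult Psi_deriv[OF x] KK_deriv[OF x] DERIV_ident)
  show ?thesis by (intro DERIV_cong[OF d]) (simp add: field_simps power2_eq_square)
qed

end

lemma cont_SS: assumes "s > 0" shows "continuous_on {-1<..<1} (SS s)"
proof (rule continuous_at_imp_continuous_on, clarify)
  fix x :: real assume "x \<in> {-1<..<1}"
  hence "\<bar>x\<bar> < 1" by auto
  thus "isCont (SS s) x" by (rule DERIV_isCont[OF SS_deriv[OF assms]])
qed

context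
  fixes p q :: real
  assumes p: "p > 1" and q: "q > 0"
begin

lemma cont_Xp: "continuous_on {0..} (\<lambda>x::real. x powr p)"
  by (rule continuous_on_powr') (use p in \<open>auto intro: continuous_on_id continuous_on_const\<close>)

lemma cont_FF: "continuous_on {0..} (FF p q)"
  unfolding FF_def[abs_def]
  by (intro continuous_on_divide cont_Xp continuous_on_add continuous_on_const)
     (use den_pos[OF p q] in \<open>fastforce\<close>)

lemma cont_gg: "continuous_on {0..} (gg p q)"
  unfolding gg_def[abs_def]
  by (intro continuous_on_divide cont_Xp continuous_on_add continuous_on_const continuous_on_mult continuous_on_id)
     (use den_pos[OF p q] in \<open>fastforce\<close>)

lemma cont_Psi: "continuous_on {0..} (Psi p q)"
proof -
  have "continuous_on {0..} (\<lambda>x. SS (1/p) (FF p q x))"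
  proof (rule continuous_on_compose2[OF cont_SS[of "1/p"] cont_FF])
    show "0 < 1 / p" using p by simp
    show "FF p q ` {0..} \<subseteq> {- 1<..<1}"
    proof (rule image_subsetI)
      fix x :: real assume "x \<in> {0..}"
      hence "0 \<le> FF p q x \<and> FF p q x < 1" using FF_bounds[OF p q, of x] by simp
      thus "FF p q x \<in> {- 1<..<1}" by simp
    qed
  qed
  thus ?thesis unfolding Psi_def[abs_def] by (intro continuous_on_mult cont_gg)
qed

lemma cont_KK: "continuous_on {0..} (KK p q)"
  unfolding KK_def[abs_def] by (intro continuous_on_add continuous_on_mult continuous_on_const cont_Psi cont_gg)

lemma cont_M1: "continuous_on {0..} (M1 p q)"
  unfolding M1_def[abs_def] by (intro continuous_on_add continuous_on_diff continuous_on_mult continuous_on_const cont_Psi cont_KK continuous_on_id)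

lemma X_top: "filterlim (\<lambda>x::real. x powr p) at_top at_top"
proof (rule filterlim_at_top_mono[OF filterlim_ident])
  show "\<forall>\<^sub>F x in at_top. x \<le> x powr p"
    using eventually_ge_at_top[of "1::real"]
  proof eventually_elim
    case (elim x)
    have "x powr 1 \<le> x powr p" by (rule powr_mono) (use p elim in auto)
    thus ?case using elim by simp
  qed
qed

lemma FF_lim: "(FF p q \<longlongrightarrow> 1) at_top"
proof -
  have D: "filterlim (\<lambda>x::real. q powr p + x powr p) at_top at_top"
    by (rule filterlim_tendsto_add_at_top[OF tendsto_const X_top])
  have "((\<lambda>x. q powr p / (q powr p + x powr p)) \<longlongrightarrow> 0) at_top"
    by (rule tendsto_divide_0[OF tendsto_const filterlim_at_top_imp_at_infinity[OF D]])
  hence "((\<lambda>x. 1 - q powr p / (q powr p + x powr p)) \<longlongrightarrow> 1 - 0) at_top"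
    by (intro tendsto_diff tendsto_const)
  moreover have "eventually (\<lambda>x. 1 - q powr p / (q powr p + x powr p) = FF p q x) at_top"
    using eventually_ge_at_top[of "0::real"]
  proof eventually_elim
    case (elim x) show ?case using one_minus_FF[OF p q elim] by linarith
  qed
  ultimately show ?thesis using Lim_transform_eventually by fastforce
qed

lemma FF_left: "filterlim (FF p q) (at_left 1) at_top"
proof (rule tendsto_imp_filterlim_at_left[OF FF_lim])
  show "eventually (\<lambda>x. FF p q x < 1) at_top"
    using eventually_ge_at_top[of "0::real"]
  proof eventually_elim
    case (elim x) thus ?case using FF_bounds[OF p q elim] by simp
  qed
qed

lemma gg_lim: "(gg p q \<longlongrightarrow> 0) at_top"
proof (rule tendsto_sandwich[of "\<lambda>_. 0" _ _ "\<lambda>x. q powr p * x powr (1 - p)"])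
  show "((\<lambda>x. q powr p * x powr (1 - p)) \<longlongrightarrow> 0) at_top"
  proof -
    have "((\<lambda>x::real. x powr (1 - p)) \<longlongrightarrow> 0) at_top"
      by (rule tendsto_neg_powr) (use p filterlim_ident in auto)
    from tendsto_mult[OF tendsto_const this, of "q powr p"] show ?thesis by simp
  qed
  show "eventually (\<lambda>x. 0 \<le> gg p q x) at_top"
    using eventually_ge_at_top[of "0::real"]
    by eventually_elim (use den_pos[OF p q] in \<open>auto simp: gg_def less_imp_le\<close>)
  show "eventually (\<lambda>x. gg p q x \<le> q powr p * x powr (1 - p)) at_top"
    using eventually_gt_at_top[of "0::real"]
  proof eventually_elim
    case (elim x)
    have Q: "q powr p > 0" using q by simp
    have X: "x powr p > 0" using elim by simp
    have "gg p q x = q powr p * (x / (q powr p + x powr p))" unfolding gg_def by simp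
    also have "\<dots> \<le> q powr p * (x / x powr p)"
    proof -
      have "0 < (q powr p + x powr p) * x powr p" using mult_pos_pos[OF add_pos_pos[OF Q X] X] .
      hence "x / (q powr p + x powr p) \<le> x / x powr p"
        by (intro divide_left_mono) (use elim Q in auto)
      thus ?thesis using Q by (intro mult_left_mono) auto
    qed
    also have "x / x powr p = x powr (1 - p)" using elim by (simp add: powr_diff)
    finally show ?case .
  qed
qed auto

lemma gg_identity: assumes x: "x > 0"
  shows "gg p q x = q * (FF p q x powr (1 / p) * (1 - FF p q x) powr (1 - 1 / p))"
proof -
  define Q where "Q = q powr p"
  define X where "X = x powr p"
  have Q: "Q > 0" unfolding Q_def using q by simp
  have X: "X > 0" unfolding X_def using x by simp
  have a: "FF p q x powr (1/p) = x / (Q + X) powr (1/p)"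
    unfolding FF_def Q_def[symmetric] X_def[symmetric] using Q X x p
    by (simp add: powr_divide X_def powr_powr)
  have b: "(1 - FF p q x) powr (1 - 1/p) = q powr (p - 1) / (Q + X) powr (1 - 1/p)"
    unfolding one_minus_FF[OF p q less_imp_le[OF x]] Q_def[symmetric] X_def[symmetric] using Q X x p
    by (simp add: powr_divide Q_def powr_powr algebra_simps)
  have c: "(Q + X) powr (1/p) * (Q + X) powr (1 - 1/p) = Q + X"
    using Q X by (simp add: powr_add[symmetric])
  have d: "q * q powr (p - 1) = Q" unfolding Q_def using q by (simp add: powr_mult_base)
  have "q * (FF p q x powr (1 / p) * (1 - FF p q x) powr (1 - 1 / p))
      = (q * q powr (p - 1)) * x / ((Q + X) powr (1/p) * (Q + X) powr (1 - 1/p))"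
    unfolding a b by (simp add: field_simps)
  also have "\<dots> = Q * x / (Q + X)" unfolding c d ..
  finally show ?thesis unfolding gg_def Q_def X_def by simp
qed

definition LL :: real where "LL = (1 / p) * pi / sin (pi * (1 / p))"

lemma Psi_lim: "(Psi p q \<longlongrightarrow> q * LL) at_top"
proof -
  have s: "0 < 1/p" "1/p < 1" using p by auto
  have A: "((\<lambda>x. (1 - FF p q x) powr (1 - 1/p) * SS (1/p) (FF p q x)) \<longlongrightarrow> LL) at_top"
    unfolding LL_def by (rule filterlim_compose[OF SS_lim[OF s] FF_left])
  have B: "((\<lambda>x. FF p q x powr (1/p)) \<longlongrightarrow> 1 powr (1/p)) at_top"
    by (rule tendsto_powr'[OF FF_lim tendsto_const]) simp
  have C: "((\<lambda>x. q * (FF p q x powr (1/p) * ((1 - FF p q x) powr (1 - 1/p) * SS (1/p) (FF p q x))))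
      \<longlongrightarrow> q * (1 * LL)) at_top"
    using tendsto_mult[OF tendsto_const tendsto_mult[OF B A], of q] by simp
  have "eventually (\<lambda>x. q * (FF p q x powr (1/p) * ((1 - FF p q x) powr (1 - 1/p) * SS (1/p) (FF p q x)))
      = Psi p q x) at_top"
    using eventually_gt_at_top[of "0::real"]
    by eventually_elim (simp add: Psi_def gg_identity mult.assoc)
  from Lim_transform_eventually[OF C this] show ?thesis by simp
qed

lemma KK_lim: "(KK p q \<longlongrightarrow> (1 - 1/p) * (q * LL)) at_top"
proof -
  have "(KK p q \<longlongrightarrow> (1 - 1/p) * (q * LL) + 1/p * 0) at_top"
    unfolding KK_def[abs_def] by (intro tendsto_intros Psi_lim gg_lim)
  thus ?thesis by simp
qed

end

lemma Beta_11: "Beta (1::real) 1 = 1"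
  by (simp add: Beta_def Gamma_numeral[of "Num.One", simplified] Gamma_fact[of 1, simplified])

context
  fixes p q :: real
  assumes p: "p > 1" and q: "q > 0"
begin

lemma density_eq: assumes z: "z > 0"
  shows "gbp_density 1 1 p q z = p * z powr (p - 1) * q powr p / (q powr p + z powr p)^2"
proof -
  define a where "a = q powr (p - 1)"
  define Q where "Q = q powr p"
  define X where "X = z powr p"
  have a: "a > 0" unfolding a_def using q by simp
  have Qa: "Q = q * a" unfolding Q_def a_def using q by (simp add: powr_mult_base)
  have X: "X \<ge> 0" unfolding X_def by simp
  have e1: "(z / q) powr (1 * p - 1) = z powr (p - 1) / a"
    unfolding a_def using z q by (simp add: powr_divide)
  have e2: "(1 + (z / q) powr p) powr (1 + 1) = (1 + X / Q)^2"
    unfolding X_def Q_def using z q by (simp add: powr_divide)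
  have "gbp_density 1 1 p q z = p / q * (z powr (p - 1) / a) / (1 + X / Q)^2"
    unfolding gbp_density_def using z by (simp only: if_True e1 e2 Beta_11 mult_1_right)
  also have "\<dots> = p * z powr (p - 1) * Q / (Q + X)^2"
    unfolding Qa using a q X by (simp add: field_simps power2_eq_square)
  finally show ?thesis unfolding Q_def X_def .
qed

lemma cdf_eq: "gbp_cdf 1 1 p q x = (if x \<le> 0 then 0 else FF p q x)"
proof (cases "x \<le> 0")
  case True
  have "(gbp_density 1 1 p q has_integral 0) {..x}"
    by (rule has_integral_cong[THEN iffD1, OF _ has_integral_0]) (use True in \<open>auto simp: gbp_density_def\<close>)
  thus ?thesis using True unfolding gbp_cdf_def by (simp add: integral_unique)
next
  case False
  hence x: "x > 0" by simp
  have "(gbp_density 1 1 p q has_integral (FF p q x - FF p q 0)) {0..x}"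
  proof (rule fundamental_theorem_of_calculus_interior)
    show "continuous_on {0..x} (FF p q)" by (rule continuous_on_subset[OF cont_FF[OF p q]]) auto
    fix t assume t: "t \<in> {0<..<x}"
    show "(FF p q has_vector_derivative gbp_density 1 1 p q t) (at t)"
      using FF_deriv[OF p q, of t] density_eq[of t] t
      by (simp add: has_real_derivative_iff_has_vector_derivative)
  qed (use x in auto)
  hence I: "(gbp_density 1 1 p q has_integral FF p q x) {0..x}" using zero_vals[OF p q] by simp
  define d' where "d' t = (if t \<le> x then gbp_density 1 1 p q t else 0)" for t
  have "(d' has_integral FF p q x) {0..x}"
    by (rule has_integral_cong[THEN iffD1, OF _ I]) (auto simp: d'_def)
  hence "(d' has_integral FF p q x) {..x}"
    by (rule has_integral_on_superset) (auto simp: d'_def gbp_density_def)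
  hence "(gbp_density 1 1 p q has_integral FF p q x) {..x}"
    by (rule has_integral_cong[THEN iffD1, rotated]) (auto simp: d'_def)
  thus ?thesis using x unfolding gbp_cdf_def by (simp add: integral_unique)
qed

definition hh :: "real \<Rightarrow> real \<Rightarrow> real" where
  "hh y t = (gbp_cdf 1 1 p q t - heaviside (t - y))\<^sup>2"

lemma hh_neg: "t < 0 \<Longrightarrow> y > 0 \<Longrightarrow> hh y t = 0"
  unfolding hh_def cdf_eq heaviside_def by simp

lemma hh_mid: "0 < t \<Longrightarrow> t < y \<Longrightarrow> hh y t = (FF p q t)\<^sup>2"
  unfolding hh_def cdf_eq heaviside_def by simp

lemma hh_hi: "0 < y \<Longrightarrow> y < t \<Longrightarrow> hh y t = (1 - FF p q t)\<^sup>2"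
  unfolding hh_def cdf_eq heaviside_def by (simp add: power2_commute)

lemma KK_int: assumes y: "y > 0" and b: "y \<le> b"
  shows "(hh y has_integral (KK p q b - KK p q y)) {y..b}"
proof (rule fundamental_theorem_of_calculus_interior[OF b])
  show "continuous_on {y..b} (KK p q)" by (rule continuous_on_subset[OF cont_KK[OF p q]]) (use y in auto)
  fix t assume t: "t \<in> {y<..<b}"
  show "(KK p q has_vector_derivative hh y t) (at t)"
    using KK_deriv[OF p q, of t] hh_hi[of y t] t y
    by (simp add: has_real_derivative_iff_has_vector_derivative)
qed

lemma main_int: assumes y: "y > 0"
  shows "(hh y has_integral (y - 2 * Psi p q y + (1 - 1/p) * (q * LL p))) UNIV"
proof -
  have I1: "(hh y has_integral (M1 p q y - M1 p q 0)) {0..y}"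
  proof (rule fundamental_theorem_of_calculus_interior)
    show "continuous_on {0..y} (M1 p q)" by (rule continuous_on_subset[OF cont_M1[OF p q]]) auto
    fix t assume t: "t \<in> {0<..<y}"
    show "(M1 p q has_vector_derivative hh y t) (at t)"
      using M1_deriv[OF p q, of t] hh_mid[of t y] t
      by (simp add: has_real_derivative_iff_has_vector_derivative)
  qed (use y in auto)
  have I2: "(hh y has_integral ((1 - 1/p) * (q * LL p) - KK p q y)) {y..}"
  proof (rule has_integral_to_inf)
    fix b :: real
    show "hh y integrable_on {y..b}"
    proof (cases "y \<le> b")
      case True thus ?thesis using KK_int[OF y True] by blast
    next
      case False hence "{y..b} = {}" by simp
      thus ?thesis using integrable_on_empty[of "hh y"] by simp
    qed
  next
    have "((\<lambda>b. KK p q b - KK p q y) \<longlongrightarrow> (1 - 1/p) * (q * LL p) - KK p q y) at_top"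
      by (intro tendsto_diff KK_lim[OF p q] tendsto_const)
    moreover have "eventually (\<lambda>b. KK p q b - KK p q y = integral {y..b} (hh y)) at_top"
      using eventually_ge_at_top[of y]
    proof eventually_elim
      case (elim b) thus ?case using KK_int[OF y elim] by (simp add: integral_unique)
    qed
    ultimately show "((\<lambda>b. integral {y..b} (hh y)) \<longlongrightarrow> (1 - 1/p) * (q * LL p) - KK p q y) at_top"
      by (rule Lim_transform_eventually)
  next
    fix t show "0 \<le> hh y t" unfolding hh_def by simp
  qed
  have "(hh y has_integral ((M1 p q y - M1 p q 0) + ((1 - 1/p) * (q * LL p) - KK p q y))) ({0..y} \<union> {y..})"
  proof (rule has_integral_Un[OF I1 I2])
    have "{0..y} \<inter> {y..} = {y}" using y by auto
    thus "negligible ({0..y} \<inter> {y..})" by simp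
  qed
  moreover have "{0..y} \<union> {y..} = {0::real..}" using y by auto
  ultimately have "(hh y has_integral ((M1 p q y - M1 p q 0) + ((1 - 1/p) * (q * LL p) - KK p q y))) {0..}"
    by simp
  hence "(hh y has_integral ((M1 p q y - M1 p q 0) + ((1 - 1/p) * (q * LL p) - KK p q y))) UNIV"
    by (rule has_integral_on_superset) (use hh_neg y in auto)
  moreover have "(M1 p q y - M1 p q 0) + ((1 - 1/p) * (q * LL p) - KK p q y)
      = y - 2 * Psi p q y + (1 - 1/p) * (q * LL p)"
    using zero_vals[OF p q] unfolding M1_def by simp
  ultimately show ?thesis by simp
qed

end

theorem mainTheorem7:
  fixes p q y :: real
  assumes "p > 1" and "q > 0" and "y > 0"
  shows "((\<lambda>x. (gbp_cdf 1 1 p q x - heaviside (x - y))\<^sup>2) has_integral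
           ((p - 1) / p\<^sup>2 * (q * pi / sin (pi / p))
            + y * (1 - 2 * q powr p / (q powr p + y powr p)
                       * hyp2F1 1 1 (1 + 1 / p) (y powr p / (q powr p + y powr p))))) UNIV"
proof -
  note M = main_int[OF assms]
  have e1: "(1 - 1/p) * (q * LL p) = (p - 1) / p\<^sup>2 * (q * pi / sin (pi / p))"
    using assms(1) unfolding LL_def[OF assms(1,2)] by (simp add: field_simps power2_eq_square)
  have e2: "Psi p q y = y * q powr p / (q powr p + y powr p) * hyp2F1 1 1 (1 + 1 / p) (y powr p / (q powr p + y powr p))"
    unfolding Psi_def gg_def FF_def hyp_SS ..
  have "y - 2 * Psi p q y + (1 - 1/p) * (q * LL p) =
     (p - 1) / p\<^sup>2 * (q * pi / sin (pi / p))
            + y * (1 - 2 * q powr p / (q powr p + y powr p)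
                       * hyp2F1 1 1 (1 + 1 / p) (y powr p / (q powr p + y powr p)))"
    unfolding e1 e2 by (simp add: algebra_simps)
  moreover have "hh p q y = (\<lambda>x. (gbp_cdf 1 1 p q x - heaviside (x - y))\<^sup>2)"
    by (rule ext) (simp add: hh_def[OF assms(1,2)])
  ultimately show ?thesis using M by simp
qed

end
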